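(* Let $(\xi_j)_{j\ge 0}$ be independent, identically distributed random variables taking values in $\{-1,0,1\}$ with $\max_{x\in\{-1,0,1\}} \mathbb{P}(\xi_0 = x) < \frac{1}{\sqrt{3}}$, and for $n\ge 1$ let $P(z):=\sum_{j=0}^n \xi_j z^j$. There exist constants $C,c>0$ (depending only on the distribution of $\xi_0$) such that for every $n\ge1$ and every $1\le d\le n$, \[\mathbb{P}(P\text{ has a double root } \alpha \text{ with } \deg(\alpha)\ge d)\le C\exp(-cd).\]
   Context: For an algebraic integer $\alpha$, $\deg(\alpha)$ denotes its algebraic degree, i.e., the degree of its minimal polynomial (the monic polynomial in $\mathbb{Z}[x]$ of least degree having $\alpha$ as a root). The event refers to $P$ having a double root (root of multiplicity at least $2$) $\alpha$ which is an algebraic integer of degree at least $d$. *)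

theory Defs
  imports "HOL-Probability.Probability" "HOL-Computational_Algebra.Polynomial"
begin

text \<open>Algebraic degree of an algebraic integer: the degree of its minimal polynomial,
  i.e. the least degree of a monic integer polynomial having it as a root.\<close>
definition alg_degree :: "complex \<Rightarrow> nat" where
  "alg_degree \<alpha> = (LEAST k. \<exists>q :: int poly. lead_coeff q = 1 \<and> degree q = k
                              \<and> poly (map_poly of_int q) \<alpha> = 0)"

definition rand_poly :: "nat \<Rightarrow> (nat \<Rightarrow> int) \<Rightarrow> int poly" where
  "rand_poly n \<xi> = Poly (map \<xi> [0..<Suc n])"

definition double_root :: "int poly \<Rightarrow> complex \<Rightarrow> bool" where
  "double_root P \<alpha> \<longleftrightarrow> [:-\<alpha>, 1:] ^ 2 dvd map_poly of_int P"

end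

theory Submission
  imports Defs
begin

lemma prim_dvd_smult:
  fixes F G Q :: "int poly"
  assumes c: "content F = 1" and a: "a \<noteq> 0" and e: "smult a G = F * Q"
  shows "F dvd G"
proof -
  have "content (smult a G) = content Q" using e c by (simp add: content_mult)
  hence "normalize a * content G = content Q" by simp
  hence "a dvd content Q" by (metis dvd_mult2 dvd_refl normalize_dvd_iff)
  hence ad: "\<forall>i. a dvd coeff Q i" using content_dvd_coeff dvd_trans by blast
  define Q' where "Q' = map_poly (\<lambda>x. x div a) Q"
  have "Q = smult a Q'" unfolding Q'_def
    by (rule poly_eqI) (use ad in \<open>simp add: coeff_map_poly\<close>)
  hence "smult a G = smult a (F * Q')" using e by simp
  hence "G = F * Q'" using a smult_cancel by blast
  thus ?thesis by simp
qed

lemma mp_add: "map_poly (of_int :: int \<Rightarrow> 'a::comm_ring_1) (p + q) = map_poly of_int p + map_poly of_int q"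
  by (rule poly_eqI) (simp add: coeff_map_poly)

lemma mp_mult: "map_poly (of_int :: int \<Rightarrow> 'a::comm_ring_1) (p * q) = map_poly of_int p * map_poly of_int q"
proof (induction p)
  case 0 then show ?case by simp
next
  case (pCons a p)
  then show ?case
    by (simp add: mp_add map_poly_smult map_poly_pCons)
qed

lemma pderiv_map_of_int:
  "pderiv (map_poly (of_int :: int \<Rightarrow> complex) P) = map_poly of_int (pderiv P)"
  by (rule poly_eqI) (simp add: coeff_pderiv coeff_map_poly)

lemma double_root_pderiv:
  assumes "double_root P \<alpha>"
  shows "poly (map_poly of_int P) \<alpha> = 0" "poly (map_poly of_int (pderiv P)) \<alpha> = 0"
proof -
  from assms obtain B where B: "map_poly of_int P = [:-\<alpha>, 1:]^2 * B"
    unfolding double_root_def by (auto elim: dvdE)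
  show "poly (map_poly of_int P) \<alpha> = 0" using B by simp
  have "pderiv (map_poly of_int P) = [:-\<alpha>, 1:]^2 * pderiv B + B * pderiv ([:-\<alpha>, 1:]^2)"
    using B pderiv_mult by metis
  hence "poly (pderiv (map_poly of_int P)) \<alpha> = 0"
    by (simp add: pderiv_power_Suc numeral_2_eq_2 pderiv_pCons)
  thus "poly (map_poly of_int (pderiv P)) \<alpha> = 0" by (simp add: pderiv_map_of_int)
qed

lemma root_dvd_min:
  fixes F G :: "int poly" and \<alpha> :: complex
  assumes cF: "content F = 1" and F0: "F \<noteq> 0"
    and rF: "poly (map_poly of_int F) \<alpha> = 0"
    and minF: "\<And>H. H \<noteq> 0 \<Longrightarrow> poly (map_poly of_int H) \<alpha> = 0 \<Longrightarrow> degree F \<le> degree H"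
    and rG: "poly (map_poly of_int G) \<alpha> = 0"
  shows "F dvd G"
proof -
  obtain q r where pd: "pseudo_divmod G F = (q, r)" by (cases "pseudo_divmod G F") auto
  define a where "a = coeff F (degree F) ^ (Suc (degree G) - degree F)"
  have e: "smult a G = F * q + r" and dr: "r = 0 \<or> degree r < degree F"
    using pseudo_divmod[OF F0 pd] by (auto simp: a_def)
  have a0: "a \<noteq> 0" using F0 by (simp add: a_def)
  have "map_poly (of_int :: int \<Rightarrow> complex) (smult a G) = map_poly of_int (F * q + r)" using e by simp
  hence "smult (of_int a) (map_poly of_int G) = map_poly of_int F * map_poly of_int q + map_poly (of_int :: int \<Rightarrow> complex) r"
    by (simp add: map_poly_smult mp_add mp_mult)
  hence "poly (map_poly of_int r) \<alpha> = 0"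
    using rF rG by (metis add_0 mult_zero_left poly_add poly_mult poly_smult mult_zero_right)
  hence "r = 0" using dr minF by force
  thus ?thesis using prim_dvd_smult[OF cF a0] e by simp
qed

lemma mp_smult: "map_poly (of_int :: int \<Rightarrow> 'a::comm_ring_1) (smult c p) = smult (of_int c) (map_poly of_int p)"
  by (simp add: map_poly_smult)

lemma double_root_monic:
  fixes P :: "int poly" and \<alpha> :: complex
  assumes P0: "P \<noteq> 0" and lc: "lead_coeff P = 1 \<or> lead_coeff P = -1" and dr: "double_root P \<alpha>"
  shows "\<exists>R. lead_coeff R = 1 \<and> poly (map_poly of_int R) \<alpha> = 0 \<and> R^2 dvd P"
proof -
  define K where "K = {k. \<exists>F::int poly. F \<noteq> 0 \<and> poly (map_poly of_int F) \<alpha> = 0 \<and> degree F = k}"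
  have rP: "poly (map_poly of_int P) \<alpha> = 0" and rP': "poly (map_poly of_int (pderiv P)) \<alpha> = 0"
    using double_root_pderiv[OF dr] by auto
  have "degree P \<in> K" using P0 rP unfolding K_def by blast
  hence "Least (\<lambda>k. k \<in> K) \<in> K" by (rule LeastI)
  then obtain F0 :: "int poly" where F0: "F0 \<noteq> 0" "poly (map_poly of_int F0) \<alpha> = 0"
     "degree F0 = Least (\<lambda>k. k \<in> K)" unfolding K_def by blast
  define F where "F = primitive_part F0"
  have Fn: "F \<noteq> 0" using F0 by (simp add: F_def)
  have cF: "content F = 1" using F0 by (simp add: F_def)
  have "F0 = smult (content F0) F" by (simp add: F_def)
  hence "poly (map_poly of_int F0) \<alpha> = of_int (content F0) * poly (map_poly of_int F) \<alpha>"
    by (metis mp_smult poly_smult)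
  hence rF: "poly (map_poly of_int F) \<alpha> = 0" using F0 by simp
  have minF: "degree F \<le> degree H" if "H \<noteq> 0" "poly (map_poly of_int H) \<alpha> = 0" for H :: "int poly"
  proof -
    have "degree H \<in> K" using that unfolding K_def by blast
    hence "Least (\<lambda>k. k \<in> K) \<le> degree H" by (rule Least_le)
    thus ?thesis using F0 by (simp add: F_def)
  qed
  have dv: "F dvd G" if "poly (map_poly of_int G) \<alpha> = 0" for G
    using root_dvd_min[OF cF Fn rF minF that] by blast
  obtain A where A: "P = F * A" using dv[OF rP] by (auto elim: dvdE)
  have "pderiv P = F * pderiv A + A * pderiv F" using A pderiv_mult by metis
  hence "poly (map_poly of_int (pderiv P)) \<alpha> =
     poly (map_poly of_int F) \<alpha> * poly (map_poly of_int (pderiv A)) \<alpha> +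
     poly (map_poly of_int A) \<alpha> * poly (map_poly of_int (pderiv F)) \<alpha>"
    by (simp add: mp_add mp_mult)
  hence prod0: "poly (map_poly of_int A) \<alpha> * poly (map_poly of_int (pderiv F)) \<alpha> = 0"
    using rP' rF by simp
  have dF: "degree F \<noteq> 0"
  proof
    assume "degree F = 0"
    then obtain c where "F = [:c:]" by (metis degree_eq_zeroE)
    thus False using rF Fn by (simp add: map_poly_pCons)
  qed
  have "poly (map_poly of_int (pderiv F)) \<alpha> \<noteq> 0"
  proof
    assume h: "poly (map_poly of_int (pderiv F)) \<alpha> = 0"
    have "pderiv F \<noteq> 0" using dF by (simp add: pderiv_eq_0_iff)
    hence "degree F \<le> degree (pderiv F)" using minF h by blast
    thus False using dF by (simp add: degree_pderiv)
  qed
  hence "poly (map_poly of_int A) \<alpha> = 0" using prod0 by simp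
  then obtain B where B: "A = F * B" using dv by (auto elim: dvdE)
  have PF: "P = F^2 * B" using A B by (simp add: power2_eq_square mult.assoc)
  have "lead_coeff P = lead_coeff F * (lead_coeff F * lead_coeff B)"
    using PF by (simp add: lead_coeff_mult power2_eq_square)
  hence "lead_coeff F dvd 1" using lc by (metis dvdI dvd_minus_iff)
  hence lF: "lead_coeff F = 1 \<or> lead_coeff F = -1" by auto
  define R where "R = smult (lead_coeff F) F"
  have "lead_coeff R = 1" using lF by (auto simp: R_def)
  moreover have "poly (map_poly of_int R) \<alpha> = 0" using rF by (simp add: R_def mp_smult)
  moreover have "R^2 = F^2" using lF by (auto simp: R_def power2_eq_square)
  ultimately show ?thesis using PF by auto
qed

lemma mod3_low:
  fixes S T U D :: "int poly"
  assumes lS: "lead_coeff S = 1" and e: "D = S*T + smult 3 U"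
    and hi: "\<forall>i \<ge> degree S. coeff D i = 0"
  shows "3 dvd coeff D i"
proof -
  have S0: "S \<noteq> 0" using lS by auto
  obtain q r where pd: "pseudo_divmod U S = (q, r)" by (cases "pseudo_divmod U S") auto
  have eU: "U = S * q + r" and dr: "r = 0 \<or> degree r < degree S"
    using pseudo_divmod[OF S0 pd] lS by auto
  define W where "W = T + smult 3 q"
  have eW: "D - smult 3 r = S * W" using e eU by (simp add: W_def algebra_simps smult_add_right)
  have "W = 0"
  proof (rule ccontr)
    assume W0: "W \<noteq> 0"
    have "coeff (S * W) (degree S + degree W) = lead_coeff W"
      using lS by (simp add: coeff_mult_degree_sum)
    moreover have "coeff (D - smult 3 r) (degree S + degree W) = 0"
      using hi dr by (auto intro: coeff_eq_0)
    ultimately show False using eW W0 by simp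
  qed
  hence "D = smult 3 r" using eW by simp
  thus ?thesis by simp
qed

lemma mod3_reduce:
  fixes R P :: "int poly"
  assumes lR: "lead_coeff R = 1" and dv: "R^2 dvd P"
  shows "\<exists>xs. set xs \<subseteq> {0,1,2} \<and> length xs = degree R \<and>
           (\<exists>T U. P = (Poly (xs @ [1]))^2 * T + smult 3 U)"
proof -
  define k where "k = degree R"
  define xs where "xs = map (\<lambda>i. coeff R i mod 3) [0..<k]"
  define V where "V = Poly (map (\<lambda>i. coeff R i div 3) [0..<k])"
  define Rt where "Rt = Poly (xs @ [1])"
  have "R = Rt + smult 3 V"
  proof (rule poly_eqI)
    fix i
    show "coeff R i = coeff (Rt + smult 3 V) i"
    proof (cases "i < k")
      case True
      thus ?thesis by (simp add: Rt_def V_def xs_def nth_default_def nth_append)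
    next
      case False
      thus ?thesis using lR
        by (cases "i = k") (auto simp: Rt_def V_def xs_def nth_default_def nth_append k_def coeff_eq_0)
    qed
  qed
  obtain T where T: "P = R^2 * T" using dv by (auto elim: dvdE)
  have "P = Rt^2 * T + smult 3 (V * (Rt + Rt + smult 3 V) * T)"
    unfolding T \<open>R = Rt + smult 3 V\<close>
    by (simp add: power2_eq_square algebra_simps smult_add_right)
  moreover have "set xs \<subseteq> {0,1,2}" by (auto simp: xs_def)
  moreover have "length xs = degree R" by (simp add: xs_def k_def)
  ultimately show ?thesis unfolding Rt_def by blast
qed

lemma coeff_rand_poly: "coeff (rand_poly n \<xi>) i = (if i \<le> n then \<xi> i else 0)"
  by (auto simp: rand_poly_def nth_default_def simp del: upt_Suc)

lemma prob_E:
  fixes p :: "int pmf" and q :: real and S :: "int poly"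
  assumes supp: "set_pmf p \<subseteq> {-1,0,1}" and qb: "\<And>x. pmf p x \<le> q"
    and lS: "lead_coeff S = 1" and mn: "degree S \<le> n"
  shows "measure_pmf.prob (Pi_pmf {0..n} 0 (\<lambda>_. p)) {\<xi>. \<exists>T U. rand_poly n \<xi> = S*T + smult 3 U}
           \<le> q ^ degree S"
proof -
  define M where "M = Pi_pmf {0..n} 0 (\<lambda>_. p)"
  define E where "E = {\<xi>. \<exists>T U. rand_poly n \<xi> = S*T + smult 3 U}"
  define m where "m = degree S"
  define L where "L = {0..<m}"
  define H where "H = {m..n}"
  define MH where "MH = Pi_pmf H 0 (\<lambda>_. p)"
  define rH where "rH = (\<lambda>f::nat\<Rightarrow>int. \<lambda>j. if j \<in> H then f j else 0)"
  have q0: "0 \<le> q" using qb[of 0] pmf_nonneg[of p 0] by linarith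
  have Sup: "set_pmf M = PiE_dflt {0..n} 0 (\<lambda>_. set_pmf p)"
    unfolding M_def by (simp add: set_Pi_pmf o_def)
  have finp: "finite (set_pmf p)" using supp finite_subset by blast
  have finSup: "finite (set_pmf M)" unfolding Sup using finp by auto
  have supv: "f j \<in> {-1,0,1}" "j > n \<Longrightarrow> f j = 0" if "f \<in> set_pmf M" for f j
    using that supp unfolding Sup PiE_dflt_def by (cases "j \<le> n"; auto)+
  have LH: "{0..n} = L \<union> H" "L \<inter> H = {}" using mn by (auto simp: L_def H_def m_def)
  have inj: "inj_on rH (E \<inter> set_pmf M)"
  proof (rule inj_onI)
    fix f1 f2 assume f1: "f1 \<in> E \<inter> set_pmf M" and f2: "f2 \<in> E \<inter> set_pmf M" and r: "rH f1 = rH f2"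
    obtain T1 U1 where e1: "rand_poly n f1 = S*T1 + smult 3 U1" using f1 by (auto simp: E_def)
    obtain T2 U2 where e2: "rand_poly n f2 = S*T2 + smult 3 U2" using f2 by (auto simp: E_def)
    define D where "D = rand_poly n f1 - rand_poly n f2"
    have eD: "D = S*(T1-T2) + smult 3 (U1-U2)" using e1 e2
      by (simp add: D_def algebra_simps smult_diff_right)
    have cD: "coeff D i = (if i \<le> n then f1 i - f2 i else 0)" for i
      by (simp add: D_def coeff_rand_poly)
    have hi: "\<forall>i \<ge> degree S. coeff D i = 0"
    proof (intro allI impI)
      fix i assume "degree S \<le> i"
      hence "i \<le> n \<Longrightarrow> f1 i = f2 i" using fun_cong[OF r, of i] by (simp add: rH_def H_def m_def)
      thus "coeff D i = 0" by (simp add: cD)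
    qed
    show "f1 = f2"
    proof
      fix j
      show "f1 j = f2 j"
      proof (cases "j \<le> n")
        case True
        have "3 dvd coeff D j" using mod3_low[OF lS eD hi] .
        hence "3 dvd f1 j - f2 j" using True by (simp add: cD)
        moreover have "f1 j \<in> {-1,0,1}" "f2 j \<in> {-1,0,1}" using f1 f2 supv by auto
        ultimately show ?thesis by auto
      next
        case False thus ?thesis using supv(2)[of f1 j] supv(2)[of f2 j] f1 f2 by auto
      qed
    qed
  qed
  have pmf_bound: "pmf M f \<le> q ^ m * pmf MH (rH f)" if "f \<in> set_pmf M" for f
  proof -
    have "pmf M f = (\<Prod>j\<in>{0..n}. pmf p (f j))"
      using supv[OF that] unfolding M_def by (subst pmf_Pi) auto
    also have "\<dots> = (\<Prod>j\<in>L. pmf p (f j)) * (\<Prod>j\<in>H. pmf p (f j))"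
      unfolding LH(1) by (rule prod.union_disjoint) (use LH in \<open>auto simp: L_def H_def\<close>)
    also have "(\<Prod>j\<in>H. pmf p (f j)) = pmf MH (rH f)"
      unfolding MH_def by (subst pmf_Pi) (auto simp: rH_def H_def intro!: prod.cong)
    also have "(\<Prod>j\<in>L. pmf p (f j)) \<le> (\<Prod>j\<in>L. q)"
      by (rule prod_mono) (auto simp: qb)
    also have "(\<Prod>j\<in>L. q) = q ^ m" by (simp add: L_def)
    finally show ?thesis by (simp add: mult_right_mono)
  qed
  have "measure_pmf.prob M E = measure_pmf.prob M (E \<inter> set_pmf M)"
    by (simp add: measure_Int_set_pmf)
  also have "\<dots> = (\<Sum>f\<in>E \<inter> set_pmf M. pmf M f)"
    using finSup by (simp add: measure_measure_pmf_finite)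
  also have "\<dots> \<le> (\<Sum>f\<in>E \<inter> set_pmf M. q ^ m * pmf MH (rH f))"
    by (rule sum_mono) (auto intro: pmf_bound)
  also have "\<dots> = q ^ m * (\<Sum>g\<in>rH ` (E \<inter> set_pmf M). pmf MH g)"
    by (simp add: sum_distrib_left sum.reindex[OF inj])
  also have "(\<Sum>g\<in>rH ` (E \<inter> set_pmf M). pmf MH g) = measure_pmf.prob MH (rH ` (E \<inter> set_pmf M))"
    using finSup by (simp add: measure_measure_pmf_finite)
  also have "q ^ m * \<dots> \<le> q ^ m * 1"
    by (rule mult_left_mono) (auto simp: q0)
  finally show ?thesis by (simp add: M_def E_def m_def)
qed

lemma geo_eq:
  fixes \<beta> :: real
  shows "d \<le> n \<Longrightarrow> (1 - \<beta>) * (\<Sum>k\<in>{d..n}. \<beta>^k) = \<beta>^d - \<beta>^(Suc n)"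
proof (induction n)
  case 0 thus ?case by (simp add: algebra_simps)
next
  case (Suc n)
  show ?case
  proof (cases "d = Suc n")
    case True thus ?thesis by (simp add: algebra_simps)
  next
    case False
    hence "d \<le> n" using Suc.prems by simp
    have "(\<Sum>k\<in>{d..Suc n}. \<beta>^k) = (\<Sum>k\<in>{d..n}. \<beta>^k) + \<beta>^Suc n"
      using \<open>d \<le> n\<close> by (simp add: sum.cl_ivl_Suc)
    hence "(1 - \<beta>) * (\<Sum>k\<in>{d..Suc n}. \<beta>^k) = (1 - \<beta>) * (\<Sum>k\<in>{d..n}. \<beta>^k) + (1 - \<beta>) * \<beta>^Suc n"
      by (simp add: distrib_left)
    also have "\<dots> = \<beta>^d - \<beta>^(Suc n) + (1 - \<beta>) * \<beta>^Suc n" using Suc.IH \<open>d \<le> n\<close> by simp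
    also have "\<dots> = \<beta>^d - \<beta>^(Suc (Suc n))" by (simp add: algebra_simps)
    finally show ?thesis .
  qed
qed

lemma geo_le:
  fixes \<beta> :: real
  assumes "0 \<le> \<beta>" "\<beta> < 1"
  shows "(\<Sum>k\<in>{d..n}. \<beta>^k) \<le> \<beta>^d / (1 - \<beta>)"
proof (cases "d \<le> n")
  case True
  have "(1 - \<beta>) * (\<Sum>k\<in>{d..n}. \<beta>^k) \<le> \<beta>^d" using geo_eq[OF True, of \<beta>] assms by simp
  thus ?thesis using assms by (simp add: field_simps mult.commute)
next
  case False thus ?thesis using assms by simp
qed

lemma Poly_monic:
  fixes xs :: "int list"
  shows "lead_coeff (Poly (xs @ [1])) = 1" "degree (Poly (xs @ [1])) = length xs"
proof -
  have d: "degree (Poly (xs @ [1])) = length xs"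
  proof (rule antisym)
    show "degree (Poly (xs @ [1])) \<le> length xs"
      by (rule degree_le) (auto simp: nth_default_def)
    show "length xs \<le> degree (Poly (xs @ [1]))"
      by (rule le_degree) (simp add: nth_default_def)
  qed
  thus "degree (Poly (xs @ [1])) = length xs" .
  show "lead_coeff (Poly (xs @ [1])) = 1" using d by (simp add: nth_default_def)
qed

lemma event_incl:
  fixes p :: "int pmf"
  assumes supp: "set_pmf p \<subseteq> {-1,0,1}"
    and xi: "\<xi> \<in> set_pmf (Pi_pmf {0..n} 0 (\<lambda>_. p))"
    and ev: "double_root (rand_poly n \<xi>) \<alpha>" "alg_degree \<alpha> \<ge> d"
    and P0: "rand_poly n \<xi> \<noteq> 0"
  shows "\<exists>k\<in>{d..n}. \<exists>xs\<in>{xs. set xs \<subseteq> {0,1,2} \<and> length xs = k}.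
           2*k \<le> n \<and> (\<exists>T U. rand_poly n \<xi> = (Poly (xs @ [1]))^2 * T + smult 3 U)"
proof -
  define P where "P = rand_poly n \<xi>"
  have vals: "\<xi> j \<in> {-1,0,1}" if "j \<le> n" for j
    using xi supp that by (auto simp: set_Pi_pmf PiE_dflt_def)
  have Pn: "P \<noteq> 0" using P0 by (simp add: P_def)
  have dP: "degree P \<le> n"
  proof (rule ccontr)
    assume "\<not> degree P \<le> n"
    hence "lead_coeff P = 0" by (simp add: P_def coeff_rand_poly)
    thus False using Pn by simp
  qed
  have "lead_coeff P = \<xi> (degree P)" using dP by (simp add: P_def coeff_rand_poly)
  moreover have "lead_coeff P \<noteq> 0" using Pn by simp
  ultimately have lc: "lead_coeff P = 1 \<or> lead_coeff P = -1" using vals[OF dP] by auto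
  obtain R where R: "lead_coeff R = 1" "poly (map_poly of_int R) \<alpha> = 0" "R^2 dvd P"
    using double_root_monic[OF Pn lc] ev(1) by (auto simp: P_def)
  have "alg_degree \<alpha> \<le> degree R"
    unfolding alg_degree_def by (rule Least_le) (use R in auto)
  hence kd: "d \<le> degree R" using ev(2) by simp
  have "degree (R^2) \<le> degree P" using R(3) Pn by (rule dvd_imp_degree_le)
  moreover have "degree (R^2) = 2 * degree R" using R(1)
    by (metis degree_power_eq leading_coeff_0_iff zero_neq_one)
  ultimately have k2: "2 * degree R \<le> n" using dP by simp
  obtain xs where xs: "set xs \<subseteq> {0,1,2}" "length xs = degree R"
      "\<exists>T U. P = (Poly (xs @ [1]))^2 * T + smult 3 U"
    using mod3_reduce[OF R(1) R(3)] by blast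
  show ?thesis
    by (rule bexI[of _ "degree R"], rule bexI[of _ xs]) (use xs k2 kd in \<open>auto simp: P_def\<close>)
qed

theorem lemma1p3:
  fixes p :: "int pmf"
  assumes supp: "set_pmf p \<subseteq> {-1, 0, 1}"
    and small: "\<forall>x\<in>{-1, 0, 1::int}. pmf p x < 1 / sqrt 3"
  shows "\<exists>C > 0. \<exists>c > (0::real). \<forall>n d. 1 \<le> n \<longrightarrow> 1 \<le> d \<longrightarrow> d \<le> n \<longrightarrow>
           measure_pmf.prob (Pi_pmf {0..n} 0 (\<lambda>_. p))
             {\<xi>. \<exists>\<alpha>. double_root (rand_poly n \<xi>) \<alpha> \<and> algebraic_int \<alpha> \<and> alg_degree \<alpha> \<ge> d}
           \<le> C * exp (- c * real d)"
proof -
  define q where "q = max (pmf p (-1)) (max (pmf p 0) (pmf p 1))"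
  have q0: "0 \<le> q" by (simp add: q_def le_max_iff_disj)
  have qb: "pmf p x \<le> q" for x
  proof (cases "x \<in> {-1,0,1}")
    case True thus ?thesis by (auto simp: q_def)
  next
    case False
    hence "x \<notin> set_pmf p" using supp by blast
    thus ?thesis using q0 by (simp add: set_pmf_eq)
  qed
  have qs: "q < 1 / sqrt 3" using small by (simp add: q_def)
  have s3: "sqrt 3 > (1::real)" by simp
  hence q1: "q < 1" using qs by (smt (verit) divide_less_eq_1_pos)
  have "q^2 < (1 / sqrt 3)^2" using qs q0 by (intro power_strict_mono) auto
  hence q2: "q^2 < 1/3" by (simp add: power_divide)
  define r where "r = 3 * q^2"
  have r0: "0 \<le> r" and r1: "r < 1" using q2 by (auto simp: r_def)
  define \<beta> where "\<beta> = max (max q r) (1/2)"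
  have b0: "0 < \<beta>" and b1: "\<beta> < 1" using q1 r1 by (auto simp: \<beta>_def)
  have qbeta: "q \<le> \<beta>" and rbeta: "r \<le> \<beta>" by (auto simp: \<beta>_def)
  define C where "C = 1 + 1 / (1 - \<beta>)"
  define c where "c = - ln \<beta>"
  have C0: "C > 0" using b1 by (simp add: C_def add_pos_nonneg)
  have c0: "c > 0" using b0 b1 by (simp add: c_def)
  have main: "measure_pmf.prob (Pi_pmf {0..n} 0 (\<lambda>_. p))
             {\<xi>. \<exists>\<alpha>. double_root (rand_poly n \<xi>) \<alpha> \<and> algebraic_int \<alpha> \<and> alg_degree \<alpha> \<ge> d}
           \<le> C * exp (- c * real d)" if n1: "1 \<le> n" and d1: "1 \<le> d" and dn: "d \<le> n" for n d :: nat
  proof -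
    define M where "M = Pi_pmf {0..n} 0 (\<lambda>_. p)"
    define Ev where "Ev = {\<xi>. \<exists>\<alpha>. double_root (rand_poly n \<xi>) \<alpha> \<and> algebraic_int \<alpha> \<and> alg_degree \<alpha> \<ge> d}"
    define Z where "Z = {\<xi>. rand_poly n \<xi> = 0}"
    define Lk where "Lk = (\<lambda>k::nat. {xs::int list. set xs \<subseteq> {0,1,2} \<and> length xs = k})"
    define Ek where "Ek = (\<lambda>k::nat. \<lambda>xs::int list. {\<xi>. 2*k \<le> n \<and> (\<exists>T U. rand_poly n \<xi> = (Poly (xs @ [1]))^2 * T + smult 3 U)})"
    define U where "U = (\<Union>k\<in>{d..n}. \<Union>xs\<in>Lk k. Ek k xs)"
    have finL: "finite (Lk k)" for k unfolding Lk_def by (rule finite_lists_length_eq) simp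
    have cardL: "card (Lk k) = 3 ^ k" for k unfolding Lk_def by (subst card_lists_length_eq) (auto simp: numeral_3_eq_3)
    have incl: "Ev \<inter> set_pmf M \<subseteq> Z \<union> U"
    proof
      fix \<xi> assume h: "\<xi> \<in> Ev \<inter> set_pmf M"
      show "\<xi> \<in> Z \<union> U"
      proof (cases "rand_poly n \<xi> = 0")
        case True thus ?thesis by (simp add: Z_def)
      next
        case False
        from h obtain \<alpha> where a: "double_root (rand_poly n \<xi>) \<alpha>" "alg_degree \<alpha> \<ge> d"
          by (auto simp: Ev_def)
        have "\<xi> \<in> set_pmf (Pi_pmf {0..n} 0 (\<lambda>_. p))" using h by (simp add: M_def)
        from event_incl[OF supp this a False] show ?thesis
          by (auto simp: U_def Lk_def Ek_def)
      qed
    qed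
    have pZ: "measure_pmf.prob M Z \<le> \<beta> ^ d"
    proof -
      have "Z \<inter> set_pmf M \<subseteq> {\<lambda>_. 0}"
      proof
        fix \<xi> assume h: "\<xi> \<in> Z \<inter> set_pmf M"
        have "\<xi> j = 0" for j
        proof (cases "j \<le> n")
          case True
          have "coeff (rand_poly n \<xi>) j = 0" using h by (simp add: Z_def)
          thus ?thesis using True by (simp add: coeff_rand_poly)
        next
          case False thus ?thesis using h by (auto simp: M_def set_Pi_pmf PiE_dflt_def)
        qed
        thus "\<xi> \<in> {\<lambda>_. 0}" by auto
      qed
      hence "measure_pmf.prob M Z \<le> measure_pmf.prob M {\<lambda>_. 0}"
        by (metis measure_Int_set_pmf measure_pmf.finite_measure_mono sets_measure_pmf UNIV_I)
      also have "\<dots> = (\<Prod>j\<in>{0..n}. pmf p 0)"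
        by (simp add: measure_pmf_single M_def pmf_Pi)
      also have "\<dots> \<le> (\<Prod>j\<in>{0..n}. q)" by (rule prod_mono) (auto simp: qb)
      also have "\<dots> = q ^ Suc n" by simp
      also have "\<dots> \<le> q ^ d" using q0 q1 dn by (intro power_decreasing) auto
      also have "\<dots> \<le> \<beta> ^ d" using q0 qbeta by (intro power_mono)
      finally show ?thesis .
    qed
    have pE: "measure_pmf.prob M (Ek k xs) \<le> q ^ (2*k)" if "xs \<in> Lk k" for k xs
    proof (cases "2*k \<le> n")
      case True
      define S where "S = (Poly (xs @ [1]))^2"
      have lS: "lead_coeff S = 1" by (simp add: S_def lead_coeff_power Poly_monic nth_default_def)
      have nz: "Poly (xs @ [1]) \<noteq> 0" using Poly_monic(1)[of xs] by (metis leading_coeff_0_iff zero_neq_one)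
      have dS: "degree S = 2*k" using that degree_power_eq[OF nz, of 2] Poly_monic(2)[of xs]
        by (simp add: S_def Lk_def)
      have "Ek k xs = {\<xi>. \<exists>T U. rand_poly n \<xi> = S*T + smult 3 U}" using True by (auto simp: Ek_def S_def)
      hence "measure_pmf.prob M (Ek k xs) \<le> q ^ degree S"
        using prob_E[OF supp qb lS] dS True by (simp add: M_def)
      thus ?thesis using dS by simp
    next
      case False
      hence "Ek k xs = {}" by (auto simp: Ek_def)
      thus ?thesis using q0 by simp
    qed
    have pU: "measure_pmf.prob M U \<le> (\<Sum>k\<in>{d..n}. \<beta>^k)"
    proof -
      have "measure_pmf.prob M U \<le> (\<Sum>k\<in>{d..n}. measure_pmf.prob M (\<Union>xs\<in>Lk k. Ek k xs))"
        unfolding U_def by (rule measure_pmf.finite_measure_subadditive_finite) auto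
      also have "\<dots> \<le> (\<Sum>k\<in>{d..n}. \<beta>^k)"
      proof (rule sum_mono)
        fix k assume "k \<in> {d..n}"
        have "measure_pmf.prob M (\<Union>xs\<in>Lk k. Ek k xs) \<le> (\<Sum>xs\<in>Lk k. measure_pmf.prob M (Ek k xs))"
          by (rule measure_pmf.finite_measure_subadditive_finite) (auto simp: finL)
        also have "\<dots> \<le> (\<Sum>xs\<in>Lk k. q ^ (2*k))" by (rule sum_mono) (rule pE)
        also have "\<dots> = 3^k * q^(2*k)" by (simp add: cardL)
        also have "\<dots> = r ^ k" by (simp add: r_def power_mult power_mult_distrib)
        also have "\<dots> \<le> \<beta> ^ k" using r0 rbeta by (intro power_mono)
        finally show "measure_pmf.prob M (\<Union>xs\<in>Lk k. Ek k xs) \<le> \<beta> ^ k" .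
      qed
      finally show ?thesis .
    qed
    have "measure_pmf.prob M Ev = measure_pmf.prob M (Ev \<inter> set_pmf M)"
      by (simp add: measure_Int_set_pmf)
    also have "\<dots> \<le> measure_pmf.prob M (Z \<union> U)"
      using incl by (intro measure_pmf.finite_measure_mono) auto
    also have "\<dots> \<le> measure_pmf.prob M Z + measure_pmf.prob M U"
      by (rule measure_Un_le) auto
    also have "\<dots> \<le> \<beta>^d + \<beta>^d / (1 - \<beta>)"
      using pZ pU geo_le[of \<beta> d n] b0 b1 by linarith
    also have "\<dots> = C * \<beta>^d" by (simp add: C_def algebra_simps)
    also have "\<beta>^d = exp (- c * real d)"
    proof -
      have "exp (- c * real d) = exp (real d * ln \<beta>)" by (simp add: c_def)
      also have "\<dots> = exp (ln \<beta>) ^ d" by (rule exp_of_nat_mult)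
      also have "\<dots> = \<beta>^d" using b0 by simp
      finally show ?thesis by simp
    qed
    finally have fin: "measure_pmf.prob M Ev \<le> C * exp (- c * real d)" .
    thus "measure_pmf.prob (Pi_pmf {0..n} 0 (\<lambda>_. p))
             {\<xi>. \<exists>\<alpha>. double_root (rand_poly n \<xi>) \<alpha> \<and> algebraic_int \<alpha> \<and> alg_degree \<alpha> \<ge> d}
           \<le> C * exp (- c * real d)" by (simp only: M_def Ev_def)
  qed
  show ?thesis using C0 c0 main by blast
qed

end
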